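(* Let $G=(V,E)$ be a symmetric tree topology with compute nodes $V_C$, and let sets $R,S$ with $|R|\le|S|$ be initially partitioned among the compute nodes, with $N_v$ the number of elements of $R$ and $S$ held by node $v$. Let $E_\beta=\{e\in E:\min\{\sum_{v\in V_e^+}N_v,\sum_{v\in V_e^-}N_v\}\ge|R|\}$ and let $G_\beta$ be the subgraph of $G$ induced by the edge set $E_\beta$. Then $G_\beta$ is a connected tree.
   Context: The network is a directed graph $G=(V,E)$ with compute nodes $V_C\subseteq V$. It is a symmetric tree topology: for every $(u,v)\in E$ also $(v,u)\in E$ with the same bandwidth, and the underlying undirected graph is a tree. For an edge $e=(u,v)$, removing $e$ splits the compute nodes into $V_e^-$ (on $u$'s side) and $V_e^+$ (on $v$'s side). The edge-induced subgraph of $E_\beta$ has as vertices the endpoints of edges in $E_\beta$ and as edges $E_\beta$. *)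

theory Defs
  imports Main
begin

text \<open>Undirected graphs are represented as symmetric directed edge sets.
  A vertex set W is connected w.r.t. edge set F if any two vertices of W
  are joined by a path using edges of F.\<close>

definition ug_connected :: "'v set \<Rightarrow> ('v \<times> 'v) set \<Rightarrow> bool" where
  "ug_connected W F \<longleftrightarrow> (\<forall>a\<in>W. \<forall>b\<in>W. (a, b) \<in> F\<^sup>*)"

definition ug_cycle :: "('v \<times> 'v) set \<Rightarrow> 'v list \<Rightarrow> bool" where
  "ug_cycle F cs \<longleftrightarrow> length cs \<ge> 3 \<and> distinct cs \<and>
     (\<forall>i < length cs. (cs ! i, cs ! ((i + 1) mod length cs)) \<in> F)"

definition ug_acyclic :: "('v \<times> 'v) set \<Rightarrow> bool" where
  "ug_acyclic F \<longleftrightarrow> \<not> (\<exists>cs. ug_cycle F cs)"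

definition is_tree :: "'v set \<Rightarrow> ('v \<times> 'v) set \<Rightarrow> bool" where
  "is_tree W F \<longleftrightarrow> F \<subseteq> W \<times> W \<and> ug_connected W F \<and> ug_acyclic F"

text \<open>Symmetric tree topology: finite vertex set, loop-free symmetric edges,
  underlying undirected graph a tree, compute nodes a subset of the vertices.
  (Bandwidths are irrelevant for the statement.)\<close>

definition sym_tree_topology :: "'v set \<Rightarrow> ('v \<times> 'v) set \<Rightarrow> 'v set \<Rightarrow> bool" where
  "sym_tree_topology V E VC \<longleftrightarrow> finite V \<and> E \<subseteq> V \<times> V \<and> sym E \<and>
     (\<forall>v. (v, v) \<notin> E) \<and> is_tree V E \<and> VC \<subseteq> V"

text \<open>Removing the undirected edge e = (u,v): compute nodes on v's side
  (V_e^+) and on u's side (V_e^-).\<close>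

definition side_plus :: "('v \<times> 'v) set \<Rightarrow> 'v set \<Rightarrow> 'v \<times> 'v \<Rightarrow> 'v set" where
  "side_plus E VC e = {w \<in> VC. (snd e, w) \<in> (E - {e, (snd e, fst e)})\<^sup>*}"

definition side_minus :: "('v \<times> 'v) set \<Rightarrow> 'v set \<Rightarrow> 'v \<times> 'v \<Rightarrow> 'v set" where
  "side_minus E VC e = {w \<in> VC. (fst e, w) \<in> (E - {e, (snd e, fst e)})\<^sup>*}"

definition edge_verts :: "('v \<times> 'v) set \<Rightarrow> 'v set" where
  "edge_verts F = fst ` F \<union> snd ` F"

end

theory Submission
  imports Defs "HOL-Library.Transitive_Closure_Table"
begin

lemma path_nth:
  "rtrancl_path r x xs y \<Longrightarrow> i < length xs \<Longrightarrow> r ((x#xs)!i) (xs!i)"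
proof (induction arbitrary: i rule: rtrancl_path.induct)
  case (base x) then show ?case by simp
next
  case (step x y ys z)
  then show ?case by (cases i) auto
qed

lemma path_last: "rtrancl_path r x xs y \<Longrightarrow> xs \<noteq> [] \<Longrightarrow> last xs = y"
proof (induction rule: rtrancl_path.induct)
  case (base x) then show ?case by simp
next
  case (step x y ys z)
  then show ?case by (cases ys) (auto elim: rtrancl_path.cases)
qed

lemma factA:
  assumes symE: "sym E" and acy: "ug_acyclic E" and uv: "(u,v) \<in> E" and neq: "u \<noteq> v"
  shows "(u,v) \<notin> (E - {(u,v),(v,u)})\<^sup>*"
proof
  define D where "D = E - {(u,v),(v,u)}"
  assume "(u,v) \<in> (E - {(u,v),(v,u)})\<^sup>*"
  then have "(u,v) \<in> D\<^sup>*" unfolding D_def .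
  then have "(\<lambda>a b. (a,b) \<in> D)\<^sup>*\<^sup>* u v" by (simp add: rtranclp_rtrancl_eq)
  then obtain xs where "rtrancl_path (\<lambda>a b. (a,b) \<in> D) u xs v"
    by (auto simp: rtranclp_eq_rtrancl_path)
  then obtain xs' where p: "rtrancl_path (\<lambda>a b. (a,b) \<in> D) u xs' v" and d: "distinct (u # xs')"
    by (rule rtrancl_path_distinct)
  have ne: "xs' \<noteq> []" using p neq by (auto elim: rtrancl_path.cases)
  have lst: "last xs' = v" using path_last[OF p ne] .
  have len: "length xs' \<ge> 2"
  proof (rule ccontr)
    assume "\<not> length xs' \<ge> 2"
    with ne obtain w where w: "xs' = [w]" by (cases xs') (auto, case_tac list, auto)
    with lst have "w = v" by simp
    with path_nth[OF p, of 0] w have "(u,v) \<in> D" by simp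
    then show False unfolding D_def by simp
  qed
  have "ug_cycle E (u # xs')"
    unfolding ug_cycle_def
  proof (intro conjI allI impI)
    show "3 \<le> length (u # xs')" using len by simp
    show "distinct (u # xs')" using d .
    fix i assume i: "i < length (u # xs')"
    show "((u # xs') ! i, (u # xs') ! ((i + 1) mod length (u # xs'))) \<in> E"
    proof (cases "i < length xs'")
      case True
      then have "(i+1) mod length (u # xs') = i + 1" by simp
      moreover have "((u#xs')!i, xs'!i) \<in> D" using path_nth[OF p True] by simp
      ultimately show ?thesis unfolding D_def by simp
    next
      case False
      with i have ii: "i = length xs'" by simp
      then have "(i+1) mod length (u # xs') = 0" by simp
      moreover have "(u # xs') ! i = v" using ii lst ne by (simp add: last_conv_nth)
      moreover have "(v,u) \<in> E" using symE uv by (auto simp: sym_def)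
      ultimately show ?thesis by simp
    qed
  qed
  with acy show False unfolding ug_acyclic_def by blast
qed

lemma rtrancl_restrict:
  assumes "(x,w) \<in> F\<^sup>*"
    and "\<And>a b. (x,a) \<in> F\<^sup>* \<Longrightarrow> (a,b) \<in> F \<Longrightarrow> (a,b) \<in> G"
  shows "(x,w) \<in> G\<^sup>*"
  using assms(1)
proof (induction rule: rtrancl_induct)
  case base then show ?case by simp
next
  case (step y z)
  then show ?case using assms(2) by (meson rtrancl.simps)
qed

lemma sym_minus:
  assumes "sym E" shows "sym (E - {(p,q),(q,p)})"
  using assms by (auto simp: sym_def)

lemma rtr_sym:
  assumes "sym E" "(x,y) \<in> (E - {(p,q),(q,p)})\<^sup>*"
  shows "(y,x) \<in> (E - {(p,q),(q,p)})\<^sup>*"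
  using sym_rtrancl[OF sym_minus[OF assms(1)]] assms(2) by (auto simp: sym_def)

lemma split_lemma:
  assumes "(x,r) \<in> E\<^sup>*"
  shows "(x,r) \<in> (E - {(x,y),(y,x)})\<^sup>* \<or> (y,r) \<in> (E - {(x,y),(y,x)})\<^sup>*"
  using assms
proof (induction rule: rtrancl_induct)
  case base then show ?case by simp
next
  case (step s t)
  show ?case
  proof (cases "(s,t) \<in> E - {(x,y),(y,x)}")
    case True
    with step show ?thesis by (meson rtrancl.simps)
  next
    case False
    with step have "(s,t) = (x,y) \<or> (s,t) = (y,x)" by auto
    then show ?thesis by auto
  qed
qed

lemma key:
  assumes symE: "sym E"
    and A: "(x,y) \<notin> (E - {(x,y),(y,x)})\<^sup>*"
    and rx: "(r,x) \<in> (E - {(p,q),(q,p)})\<^sup>*"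
    and ry: "(r,y) \<in> (E - {(p,q),(q,p)})\<^sup>*"
    and r: "r = p \<or> r = q"
  shows "{w. (y,w) \<in> (E - {(x,y),(y,x)})\<^sup>*} \<subseteq> {w. (r,w) \<in> (E - {(p,q),(q,p)})\<^sup>*}
       \<or> {w. (x,w) \<in> (E - {(x,y),(y,x)})\<^sup>*} \<subseteq> {w. (r,w) \<in> (E - {(p,q),(q,p)})\<^sup>*}"
proof -
  define De where "De = E - {(x,y),(y,x)}"
  define Df where "Df = E - {(p,q),(q,p)}"
  have "(x,r) \<in> Df\<^sup>*" using rtr_sym[OF symE rx] unfolding Df_def .
  then have "(x,r) \<in> E\<^sup>*" unfolding Df_def by (meson Diff_subset rtrancl_mono subsetD)
  then have sp: "(x,r) \<in> De\<^sup>* \<or> (y,r) \<in> De\<^sup>*" unfolding De_def by (rule split_lemma)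
  have symDe: "\<And>a b. (a,b) \<in> De\<^sup>* \<Longrightarrow> (b,a) \<in> De\<^sup>*" unfolding De_def using rtr_sym[OF symE] by blast
  have Ax: "(x,y) \<notin> De\<^sup>*" using A unfolding De_def .
  have Ay: "(y,x) \<notin> De\<^sup>*" using Ax symDe by blast
  show ?thesis
  proof (cases "(x,r) \<in> De\<^sup>*")
    case True
    have nr: "\<And>z. (y,z) \<in> De\<^sup>* \<Longrightarrow> z \<noteq> r"
    proof
      fix z assume "(y,z) \<in> De\<^sup>*" "z = r"
      then have "(y,x) \<in> De\<^sup>*" using True symDe by (meson rtrancl_trans)
      with Ay show False by simp
    qed
    have "{w. (y,w) \<in> De\<^sup>*} \<subseteq> {w. (r,w) \<in> Df\<^sup>*}"
    proof
      fix w assume "w \<in> {w. (y,w) \<in> De\<^sup>*}"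
      then have "(y,w) \<in> De\<^sup>*" by simp
      then have "(y,w) \<in> Df\<^sup>*"
      proof (rule rtrancl_restrict)
        fix a b assume "(y,a) \<in> De\<^sup>*" "(a,b) \<in> De"
        then have "a \<noteq> r" "b \<noteq> r" using nr by (auto intro: rtrancl_into_rtrancl)
        then show "(a,b) \<in> Df" using \<open>(a,b) \<in> De\<close> r unfolding De_def Df_def by auto
      qed
      then show "w \<in> {w. (r,w) \<in> Df\<^sup>*}" using ry unfolding Df_def by (auto intro: rtrancl_trans)
    qed
    then show ?thesis unfolding De_def Df_def by blast
  next
    case False
    with sp have yr: "(y,r) \<in> De\<^sup>*" by simp
    have nr: "\<And>z. (x,z) \<in> De\<^sup>* \<Longrightarrow> z \<noteq> r"
    proof
      fix z assume "(x,z) \<in> De\<^sup>*" "z = r"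
      then have "(x,y) \<in> De\<^sup>*" using yr symDe by (meson rtrancl_trans)
      with Ax show False by simp
    qed
    have "{w. (x,w) \<in> De\<^sup>*} \<subseteq> {w. (r,w) \<in> Df\<^sup>*}"
    proof
      fix w assume "w \<in> {w. (x,w) \<in> De\<^sup>*}"
      then have "(x,w) \<in> De\<^sup>*" by simp
      then have "(x,w) \<in> Df\<^sup>*"
      proof (rule rtrancl_restrict)
        fix a b assume "(x,a) \<in> De\<^sup>*" "(a,b) \<in> De"
        then have "a \<noteq> r" "b \<noteq> r" using nr by (auto intro: rtrancl_into_rtrancl)
        then show "(a,b) \<in> Df" using \<open>(a,b) \<in> De\<close> r unfolding De_def Df_def by auto
      qed
      then show "w \<in> {w. (r,w) \<in> Df\<^sup>*}" using rx unfolding Df_def by (auto intro: rtrancl_trans)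
    qed
    then show ?thesis unfolding De_def Df_def by blast
  qed
qed

lemma crossing:
  assumes "(a,z) \<in> E\<^sup>*" "z \<notin> C" "a \<in> C"
  shows "\<exists>p q. (p,q) \<in> E \<and> p \<in> C \<and> q \<notin> C \<and> (q,z) \<in> {(x,y) \<in> E. x \<notin> C \<and> y \<notin> C}\<^sup>*"
  using assms
proof (induction arbitrary: rule: rtrancl_induct)
  case base then show ?case by simp
next
  case (step y z)
  show ?case
  proof (cases "y \<in> C")
    case True
    with step show ?thesis by blast
  next
    case False
    with step obtain p q where "(p,q) \<in> E" "p \<in> C" "q \<notin> C"
      "(q,y) \<in> {(x,y) \<in> E. x \<notin> C \<and> y \<notin> C}\<^sup>*" by blast
    moreover have "(y,z) \<in> {(x,y) \<in> E. x \<notin> C \<and> y \<notin> C}" using step False by simp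
    ultimately show ?thesis by (meson rtrancl.simps)
  qed
qed

lemma side_swap: "side_plus E VC (v,u) = side_minus E VC (u,v)"
  by (simp add: side_plus_def side_minus_def insert_commute)

lemma side_swap2: "side_minus E VC (v,u) = side_plus E VC (u,v)"
  by (simp add: side_plus_def side_minus_def insert_commute)

theorem lemma2:
  fixes V :: "'v set" and E :: "('v \<times> 'v) set" and VC :: "'v set"
    and R :: "'r set" and S :: "'s set"
    and locR :: "'r \<Rightarrow> 'v" and locS :: "'s \<Rightarrow> 'v"
    and N :: "'v \<Rightarrow> nat" and E\<^sub>\<beta> :: "('v \<times> 'v) set"
  assumes topo: "sym_tree_topology V E VC"
    and finR: "finite R" and finS: "finite S"
    and RS: "card R \<le> card S"
    and locR: "locR ` R \<subseteq> VC" and locS: "locS ` S \<subseteq> VC"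
    and N_def: "\<And>v. N v = card {x \<in> R. locR x = v} + card {y \<in> S. locS y = v}"
    and Eb_def: "E\<^sub>\<beta> = {e \<in> E. min (\<Sum>v\<in>side_plus E VC e. N v) (\<Sum>v\<in>side_minus E VC e. N v) \<ge> card R}"
  shows "is_tree (edge_verts E\<^sub>\<beta>) E\<^sub>\<beta>"
proof -
  from topo have finV: "finite V" and EV: "E \<subseteq> V \<times> V" and symE: "sym E"
    and loop: "\<And>v. (v,v) \<notin> E" and conn: "ug_connected V E" and acy: "ug_acyclic E"
    and VCV: "VC \<subseteq> V"
    unfolding sym_tree_topology_def is_tree_def by blast+
  have finVC: "finite VC" using finV VCV finite_subset by blast
  have EbE: "E\<^sub>\<beta> \<subseteq> E" unfolding Eb_def by blast
  have symEb: "(v,u) \<in> E\<^sub>\<beta>" if uv: "(u,v) \<in> E\<^sub>\<beta>" for u v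
  proof -
    have 1: "(u,v) \<in> E" and 2: "card R \<le> (\<Sum>v\<in>side_plus E VC (u,v). N v)"
      and 3: "card R \<le> (\<Sum>v\<in>side_minus E VC (u,v). N v)"
      using uv unfolding Eb_def by simp_all
    have 4: "(v,u) \<in> E" using 1 symE unfolding sym_def by blast
    show ?thesis unfolding Eb_def using 2 3 4 side_swap[of E VC v u] side_swap2[of E VC v u] by simp
  qed
  have sub: "E\<^sub>\<beta> \<subseteq> edge_verts E\<^sub>\<beta> \<times> edge_verts E\<^sub>\<beta>"
  proof
    fix e assume e: "e \<in> E\<^sub>\<beta>"
    have "fst e \<in> fst ` E\<^sub>\<beta>" "snd e \<in> snd ` E\<^sub>\<beta>" using e by auto
    then show "e \<in> edge_verts E\<^sub>\<beta> \<times> edge_verts E\<^sub>\<beta>" unfolding edge_verts_def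
      by (cases e) auto
  qed
  have acyb: "ug_acyclic E\<^sub>\<beta>"
  proof -
    have "ug_cycle E cs" if "ug_cycle E\<^sub>\<beta> cs" for cs
      using that EbE unfolding ug_cycle_def by (meson subsetD)
    then show ?thesis using acy unfolding ug_acyclic_def by blast
  qed
  have nbr: "\<exists>a'. (a,a') \<in> E\<^sub>\<beta>" if "a \<in> edge_verts E\<^sub>\<beta>" for a
  proof -
    from that have "a \<in> fst ` E\<^sub>\<beta> \<or> a \<in> snd ` E\<^sub>\<beta>" unfolding edge_verts_def by simp
    then show ?thesis
    proof
      assume "a \<in> fst ` E\<^sub>\<beta>"
      then obtain e where "e \<in> E\<^sub>\<beta>" "a = fst e" by blast
      then show ?thesis by (cases e) auto
    next
      assume "a \<in> snd ` E\<^sub>\<beta>"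
      then obtain e where "e \<in> E\<^sub>\<beta>" "a = snd e" by blast
      then show ?thesis using symEb by (cases e) auto
    qed
  qed
  have connb: "ug_connected (edge_verts E\<^sub>\<beta>) E\<^sub>\<beta>"
    unfolding ug_connected_def
  proof (intro ballI)
    fix a b assume a: "a \<in> edge_verts E\<^sub>\<beta>" and b: "b \<in> edge_verts E\<^sub>\<beta>"
    obtain a' where aa: "(a,a') \<in> E\<^sub>\<beta>" using nbr[OF a] by blast
    obtain b' where bb: "(b,b') \<in> E\<^sub>\<beta>" using nbr[OF b] by blast
    show "(a,b) \<in> E\<^sub>\<beta>\<^sup>*"
    proof (rule ccontr)
      assume nab: "(a,b) \<notin> E\<^sub>\<beta>\<^sup>*"
      define C where "C = {z. (a,z) \<in> E\<^sub>\<beta>\<^sup>*}"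
      have aC: "a \<in> C" unfolding C_def by simp
      have bC: "b \<notin> C" using nab unfolding C_def by simp
      have a'C: "a' \<in> C" using aa unfolding C_def by simp
      have b'C: "b' \<notin> C"
      proof
        assume "b' \<in> C"
        then have "(a,b') \<in> E\<^sub>\<beta>\<^sup>*" unfolding C_def by simp
        moreover have "(b',b) \<in> E\<^sub>\<beta>" using symEb bb by blast
        ultimately show False using nab by (meson rtrancl.simps)
      qed
      have aV: "a \<in> V" and bV: "b \<in> V" using aa bb EbE EV by auto
      have "(a,b) \<in> E\<^sup>*" using conn aV bV unfolding ug_connected_def by blast
      then obtain p q where pq: "(p,q) \<in> E" and pC: "p \<in> C" and qC: "q \<notin> C"
        and qb: "(q,b) \<in> {(x,y) \<in> E. x \<notin> C \<and> y \<notin> C}\<^sup>*"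
        using crossing[OF _ bC aC] by blast
      define Df where "Df = E - {(p,q),(q,p)}"
      have outD: "{(x,y) \<in> E. x \<notin> C \<and> y \<notin> C} \<subseteq> Df" unfolding Df_def using pC by auto
      have qbD: "(q,b) \<in> Df\<^sup>*" using qb rtrancl_mono[OF outD] by blast
      have "(b,b') \<in> Df" using outD bb EbE bC b'C by blast
      then have qb'D: "(q,b') \<in> Df\<^sup>*" using qbD by (meson rtrancl.simps)
      have inC: "(a,w) \<in> Df\<^sup>*" if "(a,w) \<in> E\<^sub>\<beta>\<^sup>*" for w
        using that
      proof (rule rtrancl_restrict)
        fix c d assume "(a,c) \<in> E\<^sub>\<beta>\<^sup>*" "(c,d) \<in> E\<^sub>\<beta>"
        then have "c \<in> C" "d \<in> C" unfolding C_def by (auto intro: rtrancl_into_rtrancl)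
        then show "(c,d) \<in> Df" using \<open>(c,d) \<in> E\<^sub>\<beta>\<close> EbE qC unfolding Df_def by auto
      qed
      have paD: "(p,a) \<in> Df\<^sup>*" using inC[of p] pC rtr_sym[OF symE] unfolding C_def Df_def by blast
      have pa'D: "(p,a') \<in> Df\<^sup>*" using inC[of a'] a'C paD unfolding C_def by (simp add: rtrancl_trans)
      have neqa: "a \<noteq> a'" using aa EbE loop by auto
      have neqb: "b \<noteq> b'" using bb EbE loop by auto
      have Aa: "(a,a') \<notin> (E - {(a,a'),(a',a)})\<^sup>*" using factA[OF symE acy _ neqa] aa EbE by blast
      have Ab: "(b,b') \<notin> (E - {(b,b'),(b',b)})\<^sup>*" using factA[OF symE acy _ neqb] bb EbE by blast
      from key[OF symE Aa paD[unfolded Df_def] pa'D[unfolded Df_def]]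
      have ka: "side_plus E VC (a,a') \<subseteq> side_minus E VC (p,q) \<or> side_minus E VC (a,a') \<subseteq> side_minus E VC (p,q)"
        unfolding side_plus_def side_minus_def by auto
      from key[OF symE Ab qbD[unfolded Df_def] qb'D[unfolded Df_def]]
      have kb: "side_plus E VC (b,b') \<subseteq> side_plus E VC (p,q) \<or> side_minus E VC (b,b') \<subseteq> side_plus E VC (p,q)"
        unfolding side_plus_def side_minus_def by auto
      have fin: "\<And>e. finite (side_plus E VC e)" "\<And>e. finite (side_minus E VC e)"
        unfolding side_plus_def side_minus_def using finVC by auto
      have ea: "card R \<le> (\<Sum>v\<in>side_plus E VC (a,a'). N v)" "card R \<le> (\<Sum>v\<in>side_minus E VC (a,a'). N v)"
        using aa unfolding Eb_def by auto
      have eb: "card R \<le> (\<Sum>v\<in>side_plus E VC (b,b'). N v)" "card R \<le> (\<Sum>v\<in>side_minus E VC (b,b'). N v)"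
        using bb unfolding Eb_def by auto
      have mono: "(\<Sum>v\<in>A. N v) \<le> (\<Sum>v\<in>B. N v)" if "A \<subseteq> B" "finite B" for A B
        by (rule sum_mono2[OF that(2) that(1)]) simp
      have m: "card R \<le> (\<Sum>v\<in>side_minus E VC (p,q). N v)"
      proof (cases "side_plus E VC (a,a') \<subseteq> side_minus E VC (p,q)")
        case True
        then show ?thesis using ea(1) mono[OF True fin(2)] by linarith
      next
        case False
        then have "side_minus E VC (a,a') \<subseteq> side_minus E VC (p,q)" using ka by blast
        then show ?thesis using ea(2) mono[OF _ fin(2)] by (meson le_trans)
      qed
      have pl: "card R \<le> (\<Sum>v\<in>side_plus E VC (p,q). N v)"
      proof (cases "side_plus E VC (b,b') \<subseteq> side_plus E VC (p,q)")
        case True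
        then show ?thesis using eb(1) mono[OF True fin(1)] by linarith
      next
        case False
        then have "side_minus E VC (b,b') \<subseteq> side_plus E VC (p,q)" using kb by blast
        then show ?thesis using eb(2) mono[OF _ fin(1)] by (meson le_trans)
      qed
      have "(p,q) \<in> E\<^sub>\<beta>" unfolding Eb_def using pq m pl by simp
      then have "q \<in> C" using pC unfolding C_def by (simp add: rtrancl_into_rtrancl)
      with qC show False by simp
    qed
  qed
  show ?thesis unfolding is_tree_def using sub connb acyb by blast
qed

end
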